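(* Let $Z_1,\dots,Z_n$ be independent with $Z_i\sim N(\mu_i,1)$, $\mu_i\ge0$, $r_i=\mathbf 1(\mu_i>0)$, $p_i=1-\Phi(Z_i)$. Let $\alpha,\beta\in(0,1)$ and let $M_1\subset M_2\subset\dots\subset M_n$ be a fixed (non-random) nested sequence of subsets of $\{1,\dots,n\}$ with $|M_k|=k$. Consider the test that rejects iff there exists $k\in\{1,\dots,n\}$ with $\sum_{i\in M_k}h(p_i)>C_k^\alpha k^{1/2}$. Let $S_i(1)=\mathbb P(h(p_i)=1\mid r_i=1,\{M_k\}_{k=1}^n)$ and $S_i(0)=\mathbb P(h(p_i)=1\mid r_i=0,\{M_k\}_{k=1}^n)$. Then the test has power at least $1-\beta$ if $$\exists k\in\{1,\dots,n\}:\ \sum_{i\in M_k}\big(r_i(2S_i(1)-1)+(1-r_i)(2S_i(0)-1)\big)\ge\big(C_k^\alpha+C_k^\beta\big)k^{1/2},$$ and its power is less than $1-\beta$ if $$\forall k\in\{1,\dots,n\}:\ \sum_{i\in M_k}\big(r_i(2S_i(1)-1)+(1-r_i)(2S_i(0)-1)\big)\le\big(C_k^\alpha-C_k^{1-\beta}\big)k^{1/2}.$$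
   Context: $\Phi$ is the standard Gaussian CDF; $h(p)=2\cdot\mathbf 1\{p<0.5\}-1$. For $\gamma\in(0,1)$, $k\ge1$: $C_k^\gamma=1.7\sqrt{\log\log(2k)+0.72\log\frac{5.2}{\gamma}}$. Power is the probability of rejection. *)

theory Defs
  imports "HOL-Probability.Probability"
begin

definition Phi :: "real \<Rightarrow> real" where
  "Phi x = measure (density lborel std_normal_density) {..x}"

definition hfun :: "real \<Rightarrow> real" where
  "hfun p = 2 * (if p < 1/2 then 1 else 0) - 1"

definition Ccrit :: "nat \<Rightarrow> real \<Rightarrow> real" where
  "Ccrit k \<gamma> = 1.7 * sqrt (ln (ln (2 * real k)) + 0.72 * ln (5.2 / \<gamma>))"

definition Zmodel :: "nat \<Rightarrow> (nat \<Rightarrow> real) \<Rightarrow> (nat \<Rightarrow> real) measure" where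
  "Zmodel n \<mu> = (\<Pi>\<^sub>M i\<in>{1..n}. density lborel (normal_density (\<mu> i) 1))"

definition pval :: "real \<Rightarrow> real" where
  "pval z = 1 - Phi z"

definition rind :: "(nat \<Rightarrow> real) \<Rightarrow> nat \<Rightarrow> real" where
  "rind \<mu> i = (if \<mu> i > 0 then 1 else 0)"

text \<open>S_i(s) = P(h(p_i) = 1 | r_i = s) (the M_k are fixed, so conditioning on them is void).\<close>
definition Sfun :: "nat \<Rightarrow> (nat \<Rightarrow> real) \<Rightarrow> nat \<Rightarrow> real \<Rightarrow> real" where
  "Sfun n \<mu> i s = cond_prob (Zmodel n \<mu>) (\<lambda>\<omega>. hfun (pval (\<omega> i)) = 1) (\<lambda>\<omega>. rind \<mu> i = s)"

definition power :: "nat \<Rightarrow> (nat \<Rightarrow> real) \<Rightarrow> (nat \<Rightarrow> nat set) \<Rightarrow> real \<Rightarrow> real" where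
  "power n \<mu> M \<alpha> = measure (Zmodel n \<mu>)
     {\<omega> \<in> space (Zmodel n \<mu>). \<exists>k\<in>{1..n}. (\<Sum>i\<in>M k. hfun (pval (\<omega> i))) > Ccrit k \<alpha> * sqrt (real k)}"

definition signal :: "nat \<Rightarrow> (nat \<Rightarrow> real) \<Rightarrow> (nat \<Rightarrow> nat set) \<Rightarrow> nat \<Rightarrow> real" where
  "signal n \<mu> M k = (\<Sum>i\<in>M k. rind \<mu> i * (2 * Sfun n \<mu> i 1 - 1) + (1 - rind \<mu> i) * (2 * Sfun n \<mu> i 0 - 1))"

end

theory Submission
  imports Defs
begin

definition wt :: "real list \<Rightarrow> bool list \<Rightarrow> real" where
  "wt qs bs = (\<Prod>t<length qs. if bs!t then qs!t else 1 - qs!t)"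

definition Pr :: "real list \<Rightarrow> (bool list \<Rightarrow> bool) \<Rightarrow> real" where
  "Pr qs E = (\<Sum>bs\<in>{bs. length bs = length qs \<and> E bs}. wt qs bs)"

definition okq :: "real list \<Rightarrow> bool" where
  "okq qs \<longleftrightarrow> (\<forall>t<length qs. 0 \<le> qs!t \<and> qs!t \<le> 1)"

lemma wt_Cons: "wt (q#qs) (b#bs) = (if b then q else 1 - q) * wt qs bs"
proof -
  have "(\<Prod>t<length qs. if (b#bs)!Suc t then (q#qs)!Suc t else 1 - (q#qs)!Suc t) = wt qs bs"
    unfolding wt_def by (simp only: nth_Cons_Suc)
  then show ?thesis unfolding wt_def length_Cons prod.lessThan_Suc_shift by simp
qed

lemma wt_nonneg: "okq qs \<Longrightarrow> 0 \<le> wt qs bs"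
  unfolding wt_def okq_def by (intro prod_nonneg) auto

lemma finite_len: "finite {bs::bool list. length bs = n \<and> E bs}"
  using finite_lists_length_eq[of "UNIV::bool set" n] by (rule finite_subset[rotated]) auto

lemma Pr_Nil: "Pr [] E = (if E [] then 1 else 0)"
proof -
  have "{bs::bool list. length bs = 0 \<and> E bs} = (if E [] then {[]} else {})" by auto
  then show ?thesis unfolding Pr_def by (simp add: wt_def)
qed

lemma Pr_Cons: "Pr (q#qs) E = q * Pr qs (\<lambda>bs. E (True#bs)) + (1-q) * Pr qs (\<lambda>bs. E (False#bs))"
proof -
  let ?A = "{bs. length bs = length qs \<and> E (True#bs)}"
  let ?B = "{bs. length bs = length qs \<and> E (False#bs)}"
  have eq: "{bs. length bs = length (q#qs) \<and> E bs} = Cons True ` ?A \<union> Cons False ` ?B"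
  proof (rule set_eqI)
    fix bs show "bs \<in> {bs. length bs = length (q#qs) \<and> E bs} \<longleftrightarrow> bs \<in> Cons True ` ?A \<union> Cons False ` ?B"
    proof (cases bs)
      case Nil then show ?thesis by auto
    next
      case (Cons a l) then show ?thesis by (cases a) (auto simp: image_iff)
    qed
  qed
  have "Pr (q#qs) E = sum (wt (q#qs)) (Cons True ` ?A) + sum (wt (q#qs)) (Cons False ` ?B)"
    unfolding Pr_def eq by (rule sum.union_disjoint) (auto intro: finite_len)
  also have "sum (wt (q#qs)) (Cons True ` ?A) = q * Pr qs (\<lambda>bs. E (True#bs))"
    by (subst sum.reindex) (auto simp: inj_on_def wt_Cons Pr_def sum_distrib_left)
  also have "sum (wt (q#qs)) (Cons False ` ?B) = (1-q) * Pr qs (\<lambda>bs. E (False#bs))"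
    by (subst sum.reindex) (auto simp: inj_on_def wt_Cons Pr_def sum_distrib_left)
  finally show ?thesis .
qed

lemma okq_Cons: "okq (q#qs) \<longleftrightarrow> 0 \<le> q \<and> q \<le> 1 \<and> okq qs"
  unfolding okq_def by (auto simp: nth_Cons split: nat.splits)

lemma Pr_nonneg: "okq qs \<Longrightarrow> 0 \<le> Pr qs E"
  unfolding Pr_def by (intro sum_nonneg wt_nonneg)

lemma Pr_mono: assumes "okq qs" "\<And>bs. length bs = length qs \<Longrightarrow> E bs \<Longrightarrow> F bs"
  shows "Pr qs E \<le> Pr qs F"
  unfolding Pr_def using assms by (intro sum_mono2 finite_len wt_nonneg) auto

lemma Pr_cong: assumes "\<And>bs. length bs = length qs \<Longrightarrow> E bs = F bs"
  shows "Pr qs E = Pr qs F"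
  unfolding Pr_def using assms by (intro sum.cong) auto

lemma Pr_compl: "Pr qs E + Pr qs (\<lambda>bs. \<not> E bs) = 1"
proof (induction qs arbitrary: E)
  case Nil then show ?case by (simp add: Pr_Nil)
next
  case (Cons q qs)
  have "Pr (q#qs) E + Pr (q#qs) (\<lambda>bs. \<not> E bs) =
     q * (Pr qs (\<lambda>bs. E (True#bs)) + Pr qs (\<lambda>bs. \<not> E (True#bs)))
     + (1-q) * (Pr qs (\<lambda>bs. E (False#bs)) + Pr qs (\<lambda>bs. \<not> E (False#bs)))"
    unfolding Pr_Cons by (simp only: distrib_left add_ac)
  also have "\<dots> = 1" using Cons.IH[of "\<lambda>bs. E (True#bs)"] Cons.IH[of "\<lambda>bs. E (False#bs)"] by simp
  finally show ?case .
qed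

lemma Pr_le1: "okq qs \<Longrightarrow> Pr qs E \<le> 1"
  using Pr_compl[of qs E] Pr_nonneg[of qs "\<lambda>bs. \<not> E bs"] by linarith

lemma Pr_alt: "Pr qs E = (\<Sum>bs\<in>{bs. length bs = length qs}. if E bs then wt qs bs else 0)"
proof -
  have "{bs. length bs = length qs \<and> E bs} = {bs\<in>{bs. length bs = length qs}. E bs}" by auto
  then show ?thesis unfolding Pr_def
    using sum.inter_filter[OF finite_len[of "length qs" "\<lambda>_. True"], of "wt qs" E] by simp
qed

lemma Pr_union: assumes "okq qs" "finite J"
  shows "Pr qs (\<lambda>bs. \<exists>j\<in>J. E j bs) \<le> (\<Sum>j\<in>J. Pr qs (E j))"
proof -
  let ?L = "{bs::bool list. length bs = length qs}"
  have "Pr qs (\<lambda>bs. \<exists>j\<in>J. E j bs) \<le> (\<Sum>bs\<in>?L. \<Sum>j\<in>J. if E j bs then wt qs bs else 0)"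
    unfolding Pr_alt
  proof (rule sum_mono)
    fix bs assume "bs \<in> ?L"
    show "(if \<exists>j\<in>J. E j bs then wt qs bs else 0) \<le> (\<Sum>j\<in>J. if E j bs then wt qs bs else 0)"
    proof (cases "\<exists>j\<in>J. E j bs")
      case True
      then obtain j where j: "j \<in> J" "E j bs" by blast
      have "(if E j bs then wt qs bs else 0) \<le> (\<Sum>j\<in>J. if E j bs then wt qs bs else 0)"
        by (rule member_le_sum) (use j assms wt_nonneg in auto)
      then show ?thesis using True j by simp
    next
      case False
      then show ?thesis by (simp add: sum_nonneg wt_nonneg assms)
    qed
  qed
  also have "\<dots> = (\<Sum>j\<in>J. Pr qs (E j))"
    unfolding Pr_alt by (rule sum.swap)
  finally show ?thesis .
qed

lemma hoeff_pos: fixes q l :: real assumes "0 \<le> q" "q \<le> 1" "0 \<le> l"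
  shows "q * exp (l * (2 - 2*q)) + (1-q) * exp (-(l * (2*q))) \<le> exp (l^2/2)"
proof -
  have "exp (2*l) \<ge> 1" using assms by simp
  then have pos: "0 < 1 + q * (exp (2*l) - 1)" using assms by (simp add: add_pos_nonneg)
  have "-(2*l)*q + ln (1 + q*(exp(2*l) - 1)) \<le> (2*l)^2/8"
    by (rule Hoeffdings_lemma_aux) (use assms in auto)
  then have A: "exp (-(2*l)*q + ln (1 + q*(exp(2*l) - 1))) \<le> exp (l^2/2)"
    by (simp add: power2_eq_square)
  have B: "exp (-(2*l)*q + ln (1 + q*(exp(2*l) - 1))) = exp (-(2*l)*q) * (1 + q*(exp(2*l) - 1))"
    using pos by (simp only: exp_add exp_ln)
  have C: "exp (2*l) * exp (-(l*(2*q))) = exp (l * (2 - 2*q))"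
    by (simp add: exp_add[symmetric] algebra_simps)
  have D: "-(2*l)*q = -(l*(2*q))" by simp
  have "exp (-(2*l)*q) * (1 + q*(exp(2*l) - 1)) = q * (exp (2*l) * exp (-(2*l)*q)) + (1-q) * exp (-(2*l)*q)"
    by (simp add: algebra_simps)
  also have "\<dots> = q * exp (l * (2 - 2*q)) + (1-q) * exp (-(l * (2*q)))"
    unfolding D C ..
  finally have E: "exp (-(2*l)*q) * (1 + q*(exp(2*l) - 1)) = q * exp (l * (2 - 2*q)) + (1-q) * exp (-(l * (2*q)))" .
  show ?thesis using A unfolding B E .
qed

lemma hoeff2: fixes q l :: real assumes "0 \<le> q" "q \<le> 1"
  shows "q * exp (l * (1 - (2*q-1))) + (1-q) * exp (l * (-1 - (2*q-1))) \<le> exp (l^2/2)"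
proof (cases "0 \<le> l")
  case True
  have "l * (1 - (2*q-1)) = l * (2 - 2*q)" "l * (-1 - (2*q-1)) = -(l * (2*q))" by (simp_all add: algebra_simps)
  then show ?thesis using hoeff_pos[OF assms True] by simp
next
  case False
  have h: "(1-q) * exp ((-l) * (2 - 2*(1-q))) + (1-(1-q)) * exp (-((-l) * (2*(1-q)))) \<le> exp ((-l)^2/2)"
    by (rule hoeff_pos) (use assms False in auto)
  have "l * (1 - (2*q-1)) = -((-l) * (2*(1-q)))" "l * (-1 - (2*q-1)) = (-l) * (2 - 2*(1-q))"
    by (simp_all add: algebra_simps)
  then show ?thesis using h by (simp add: algebra_simps)
qed

lemma ex_shift:
  assumes "\<not> thr \<le> (s::real)"
  shows "(\<exists>k\<le>Suc N. thr \<le> s + (\<Sum>t<k. z t ((b#bs)!t))) \<longleftrightarrow>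
         (\<exists>k\<le>N. thr \<le> (s + z 0 b) + (\<Sum>t<k. z (Suc t) (bs!t)))"
proof
  assume "\<exists>k\<le>Suc N. thr \<le> s + (\<Sum>t<k. z t ((b#bs)!t))"
  then obtain k where k: "k \<le> Suc N" "thr \<le> s + (\<Sum>t<k. z t ((b#bs)!t))" by blast
  show "\<exists>k\<le>N. thr \<le> (s + z 0 b) + (\<Sum>t<k. z (Suc t) (bs!t))"
  proof (cases k)
    case 0 then show ?thesis using k assms by simp
  next
    case (Suc k')
    have "(\<Sum>t<k. z t ((b#bs)!t)) = z 0 b + (\<Sum>t<k'. z (Suc t) (bs!t))"
      unfolding Suc sum.lessThan_Suc_shift by simp
    then show ?thesis using k Suc by (intro exI[of _ k']) auto
  qed
next
  assume "\<exists>k\<le>N. thr \<le> (s + z 0 b) + (\<Sum>t<k. z (Suc t) (bs!t))"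
  then obtain k where k: "k \<le> N" "thr \<le> (s + z 0 b) + (\<Sum>t<k. z (Suc t) (bs!t))" by blast
  have "(\<Sum>t<Suc k. z t ((b#bs)!t)) = z 0 b + (\<Sum>t<k. z (Suc t) (bs!t))"
    unfolding sum.lessThan_Suc_shift by simp
  then show "\<exists>k\<le>Suc N. thr \<le> s + (\<Sum>t<k. z t ((b#bs)!t))"
    using k by (intro exI[of _ "Suc k"]) auto
qed

lemma maximal:
  assumes "okq qs" "\<forall>t<length qs. qs!t * exp (z t True) + (1 - qs!t) * exp (z t False) \<le> 1"
  shows "Pr qs (\<lambda>bs. \<exists>k\<le>length qs. thr \<le> s + (\<Sum>t<k. z t (bs!t))) \<le> exp (s - thr)"
  using assms
proof (induction qs arbitrary: z s)
  case Nil
  then show ?case by (simp add: Pr_Nil)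
next
  case (Cons q qs)
  have q: "0 \<le> q" "q \<le> 1" "okq qs" using Cons.prems(1) by (auto simp: okq_Cons)
  show ?case
  proof (cases "thr \<le> s")
    case True
    then have "1 \<le> exp (s - thr)" by simp
    then show ?thesis by (rule order_trans[OF Pr_le1[OF Cons.prems(1)]])
  next
    case False
    let ?P = "\<lambda>b. Pr qs (\<lambda>bs. \<exists>k\<le>length qs. thr \<le> (s + z 0 b) + (\<Sum>t<k. z (Suc t) (bs!t)))"
    have eq: "Pr (q#qs) (\<lambda>bs. \<exists>k\<le>length (q#qs). thr \<le> s + (\<Sum>t<k. z t (bs!t))) = q * ?P True + (1-q) * ?P False"
      unfolding Pr_Cons length_Cons ex_shift[OF False] ..
    have hz: "\<forall>t<length qs. qs!t * exp (z (Suc t) True) + (1 - qs!t) * exp (z (Suc t) False) \<le> 1"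
      using Cons.prems(2) by auto
    have "?P b \<le> exp (s + z 0 b - thr)" for b
      using Cons.IH[OF q(3) hz, of "s + z 0 b"] by simp
    then have "q * ?P True + (1-q) * ?P False \<le> q * exp (s + z 0 True - thr) + (1-q) * exp (s + z 0 False - thr)"
      using q by (intro add_mono mult_left_mono) auto
    also have "\<dots> = exp (s - thr) * (q * exp (z 0 True) + (1-q) * exp (z 0 False))"
    proof -
      have "exp (s + z 0 b - thr) = exp (s - thr) * exp (z 0 b)" for b
      proof -
        have "s + z 0 b - thr = (s - thr) + z 0 b" by simp
        then show ?thesis by (simp only: exp_add)
      qed
      then show ?thesis by (simp add: algebra_simps)
    qed
    also have "\<dots> \<le> exp (s - thr) * 1"
      using Cons.prems(2) by (intro mult_left_mono) auto
    finally show ?thesis using eq by simp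
  qed
qed

lemma ln_ge_1m: "0 < (x::real) \<Longrightarrow> 1 - 1/x \<le> ln x"
  using ln_le_minus_one[of "1/x"] by (simp add: ln_div)

lemma lnln_ge: assumes "1 \<le> k" shows "-1/2 \<le> ln (ln (2 * real k))"
proof -
  have "ln 2 \<le> ln (2 * real k)" using assms by simp
  then have a: "2/3 \<le> ln (2 * real k)" using ln2_ge_two_thirds by linarith
  have "ln (2/3) \<le> ln (ln (2 * real k))" using a by (subst ln_le_cancel_iff) auto
  moreover have "1 - 1/(2/3) \<le> ln (2/3::real)" by (rule ln_ge_1m) simp
  ultimately show ?thesis by simp
qed

lemma ln52: "1.56 \<le> ln (5.2::real)"
proof -
  have "(5.2::real) = 2 * (2 * 1.3)" by simp
  then have "ln (5.2::real) = ln 2 + ln 2 + ln 1.3"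
    by (simp only: ln_mult) simp
  moreover have "1 - 1/1.3 \<le> ln (1.3::real)" by (rule ln_ge_1m) simp
  ultimately show ?thesis using ln2_ge_two_thirds by simp
qed

lemma lng: fixes \<gamma> :: real assumes "0 < \<gamma>" "\<gamma> < 1" shows "1.56 \<le> ln (5.2/\<gamma>)"
proof -
  have "5.2 \<le> 5.2/\<gamma>" using assms by (simp add: field_simps)
  then have "ln 5.2 \<le> ln (5.2/\<gamma>)" using assms by simp
  then show ?thesis using ln52 by simp
qed

definition Carg :: "nat \<Rightarrow> real \<Rightarrow> real" where
  "Carg k \<gamma> = ln (ln (2 * real k)) + 0.72 * ln (5.2 / \<gamma>)"

lemma Carg_ge: "1 \<le> k \<Longrightarrow> 0 < \<gamma> \<Longrightarrow> \<gamma> < 1 \<Longrightarrow> 0.6 \<le> Carg k \<gamma>"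
  using lnln_ge[of k] lng[of \<gamma>] unfolding Carg_def by simp

lemma Ccrit_Carg: "Ccrit k \<gamma> = 1.7 * sqrt (Carg k \<gamma>)"
  unfolding Ccrit_def Carg_def ..

lemma Csq: "1 \<le> k \<Longrightarrow> 0 < \<gamma> \<Longrightarrow> \<gamma> < 1 \<Longrightarrow> (Ccrit k \<gamma>)^2 = 2.89 * Carg k \<gamma>"
proof -
  assume a: "1 \<le> k" "0 < \<gamma>" "\<gamma> < 1"
  have "0 \<le> Carg k \<gamma>" using Carg_ge[OF a] by simp
  then have "(sqrt (Carg k \<gamma>))^2 = Carg k \<gamma>" by simp
  then show ?thesis unfolding Ccrit_Carg power_mult_distrib by (simp add: power2_eq_square)
qed

lemma C_gt1: assumes "1 \<le> k" "0 < \<gamma>" "\<gamma> < 1" shows "1 < Ccrit k \<gamma>"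
proof -
  have "0 \<le> Ccrit k \<gamma>" unfolding Ccrit_Carg using Carg_ge[OF assms] by simp
  moreover have "1 < (Ccrit k \<gamma>)^2" using Csq[OF assms] Carg_ge[OF assms] by simp
  ultimately show ?thesis
  proof (rule_tac ccontr)
    assume "0 \<le> Ccrit k \<gamma>" "1 < (Ccrit k \<gamma>)^2" "\<not> 1 < Ccrit k \<gamma>"
    then have "(Ccrit k \<gamma>)^2 \<le> 1^2" by (intro power_mono) auto
    then show False using \<open>1 < (Ccrit k \<gamma>)^2\<close> by simp
  qed
qed

lemma C_mono: assumes "1 \<le> k" "k \<le> k'" shows "Ccrit k \<gamma> \<le> Ccrit k' \<gamma>"
proof -
  have "ln 2 \<le> ln (2 * real k)" using assms by simp
  then have p: "0 < ln (2 * real k)" using ln2_ge_two_thirds by linarith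
  have "ln (2 * real k) \<le> ln (2 * real k')" using assms by simp
  then have "ln (ln (2 * real k)) \<le> ln (ln (2 * real k'))" using p by simp
  then show ?thesis unfolding Ccrit_def by simp
qed

lemma part1_num: assumes "1 \<le> k" "0 < \<beta>" "\<beta> < 1"
  shows "exp (- ((Ccrit k \<beta>)^2) / 2) \<le> \<beta>"
proof -
  let ?L1 = "ln (ln (2 * real k))" and ?L2 = "ln (5.2/\<beta>)"
  have L1: "-1/2 \<le> ?L1" by (rule lnln_ge) fact
  have L2: "1.56 \<le> ?L2" by (rule lng) fact+
  have "- ((Ccrit k \<beta>)^2) / 2 = -(1.445 * ?L1 + 1.0404 * ?L2)"
    using Csq[OF assms] unfolding Carg_def by simp
  also have "\<dots> \<le> 0.7225 - ?L2" using L1 L2 by simp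
  finally have "exp (- ((Ccrit k \<beta>)^2) / 2) \<le> exp (0.7225 - ?L2)" by simp
  also have "\<dots> = exp 0.7225 * (\<beta> / 5.2)"
  proof -
    have "exp ?L2 = 5.2/\<beta>" using assms by simp
    then show ?thesis by (simp only: exp_diff) simp
  qed
  also have "exp 0.7225 \<le> exp (ln (5.2::real))" using ln52 by (subst exp_le_cancel_iff) simp
  then have "exp 0.7225 * (\<beta> / 5.2) \<le> 5.2 * (\<beta> / 5.2)" using assms by (intro mult_right_mono) auto
  finally show ?thesis by simp
qed

definition kap :: real where "kap = 2 * (3 * sqrt 2 - 4)"

lemma kap_ge: "0.4846 \<le> kap"
proof -
  have "1.4141 \<le> sqrt (2::real)" by (rule real_le_rsqrt) (simp add: power2_eq_square)
  then show ?thesis unfolding kap_def by simp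
qed

lemma epoch_num: assumes "1 \<le> j" "0 < \<gamma>" "\<gamma> < 1"
  shows "exp (- (kap * (Ccrit (2^j) \<gamma>)^2)) \<le> (real (j+1) * ln 2) powr (-1.4) * (\<gamma>/5.2)"
proof -
  have k1: "1 \<le> (2::nat)^j" by simp
  have e: "ln (2 * real ((2::nat)^j)) = real (j+1) * ln 2"
    by (simp add: ln_realpow[symmetric] del: of_nat_Suc)
  let ?Y = "real (j+1) * ln 2"
  have Y: "4/3 \<le> ?Y"
  proof -
    have "2 * (2/3) \<le> real (j+1) * ln 2"
      using assms ln2_ge_two_thirds by (intro mult_mono) auto
    then show ?thesis by simp
  qed
  let ?L1 = "ln ?Y" and ?L2 = "ln (5.2/\<gamma>)"
  have L1: "0 \<le> ?L1" using Y by simp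
  have L2: "0 \<le> ?L2" using lng[OF assms(2,3)] by simp
  have "kap * (Ccrit (2^j) \<gamma>)^2 = kap * 2.89 * ?L1 + kap * 2.89 * 0.72 * ?L2"
    using Csq[OF k1 assms(2,3)] e unfolding Carg_def by (simp add: algebra_simps)
  moreover have "1.4 * ?L1 \<le> kap * 2.89 * ?L1" using kap_ge L1 by (intro mult_right_mono) auto
  moreover have "?L2 \<le> kap * 2.89 * 0.72 * ?L2"
  proof -
    have "1 \<le> kap * 2.89 * 0.72" using kap_ge by simp
    then have "1 * ?L2 \<le> (kap * 2.89 * 0.72) * ?L2" using L2 by (rule mult_right_mono)
    then show ?thesis by simp
  qed
  ultimately have "- (kap * (Ccrit (2^j) \<gamma>)^2) \<le> -(1.4 * ?L1) + (- ?L2)" by linarith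
  then have "exp (- (kap * (Ccrit (2^j) \<gamma>)^2)) \<le> exp (-(1.4 * ?L1)) * exp (-?L2)"
    by (simp add: exp_add[symmetric])
  also have "exp (-(1.4 * ?L1)) = ?Y powr (-1.4)" using Y by (simp add: powr_def)
  also have "exp (-?L2) = \<gamma>/5.2" using assms by (simp add: exp_minus)
  finally show ?thesis .
qed

lemma tele: assumes "2 \<le> (x::real)" shows "x powr (-1.4) \<le> 2.5 * ((x-1) powr (-0.4) - x powr (-0.4))"
proof -
  have d: "((\<lambda>y. y powr (-0.4)) has_real_derivative (-0.4) * y powr (-0.4 - 1)) (at y)" if "x - 1 \<le> y" for y
    by (rule has_real_derivative_powr) (use assms that in simp)
  obtain z where z: "x - 1 < z" "z < x" "x powr (-0.4) - (x-1) powr (-0.4) = (x - (x-1)) * ((-0.4) * z powr (-0.4 - 1))"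
    using MVT2[of "x-1" x "\<lambda>y. y powr (-0.4)" "\<lambda>y. (-0.4) * y powr (-0.4 - 1)"] d by auto
  have "z powr (-0.4 - 1) = z powr (-1.4)" by simp
  then have eq: "(x-1) powr (-0.4) - x powr (-0.4) = 0.4 * z powr (-1.4)" using z(3) by simp
  have "x powr (-1.4) \<le> z powr (-1.4)" by (rule powr_mono2') (use z assms in auto)
  then show ?thesis using eq by simp
qed

lemma sum_tele: "(\<Sum>j\<in>{1..n}. real (j+1) powr (-1.4)) \<le> 2.5 * (1 - real (n+1) powr (-0.4))"
proof (induction n)
  case 0 then show ?case by simp
next
  case (Suc n)
  have t: "real (Suc n + 1) powr (-1.4) \<le> 2.5 * ((real (Suc n + 1) - 1) powr (-0.4) - real (Suc n + 1) powr (-0.4))"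
    by (rule tele) simp
  have "real (Suc n + 1) - 1 = real (n+1)" by simp
  then have t2: "real (Suc n + 1) powr (-1.4) \<le> 2.5 * (real (n+1) powr (-0.4) - real (Suc n + 1) powr (-0.4))"
    using t by simp
  have "(\<Sum>j\<in>{1..Suc n}. real (j+1) powr (-1.4)) = (\<Sum>j\<in>{1..n}. real (j+1) powr (-1.4)) + real (Suc n + 1) powr (-1.4)"
    by (simp add: sum.atLeast1_atMost_eq)
  also have "\<dots> \<le> 2.5 * (1 - real (n+1) powr (-0.4)) + 2.5 * (real (n+1) powr (-0.4) - real (Suc n + 1) powr (-0.4))"
    using Suc.IH t2 by linarith
  finally show ?case by (simp add: algebra_simps)
qed

lemma ln2_powr: "ln 2 powr (-1.4) \<le> (1.84::real)"
proof -
  have "(2/3::real) powr 1.5 = (2/3) powr (1 + 1/2)" by simp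
  also have "\<dots> = (2/3) * sqrt (2/3)" by (simp only: powr_add powr_half_sqrt) simp
  finally have e: "(2/3::real) powr 1.5 = (2/3) * sqrt (2/3)" .
  have s: "0.8164 \<le> sqrt (2/3::real)" by (rule real_le_rsqrt) (simp add: power2_eq_square)
  have "(2/3::real) powr 1.5 \<le> (2/3) powr 1.4" by (rule powr_mono') auto
  also have "\<dots> \<le> ln 2 powr 1.4" by (rule powr_mono2) (use ln2_ge_two_thirds in auto)
  finally have "(0.5442::real) \<le> ln 2 powr 1.4" using e s by simp
  moreover have "ln (2::real) powr (-1.4) = 1 / ln 2 powr 1.4" by (simp add: powr_minus_divide)
  ultimately have "ln (2::real) powr (-1.4) \<le> 1 / 0.5442"
  proof -
    assume a: "(0.5442::real) \<le> ln 2 powr 1.4" "ln (2::real) powr (-1.4) = 1 / ln 2 powr 1.4"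
    have "1 / ln (2::real) powr 1.4 \<le> 1 / 0.5442" by (rule divide_left_mono) (use a in auto)
    then show ?thesis using a by simp
  qed
  then show ?thesis by simp
qed

lemma sum_bound: "(\<Sum>j\<in>{1..n}. (real (j+1) * ln 2) powr (-1.4)) < 5.2"
proof -
  have "(\<Sum>j\<in>{1..n}. (real (j+1) * ln 2) powr (-1.4)) = ln 2 powr (-1.4) * (\<Sum>j\<in>{1..n}. real (j+1) powr (-1.4))"
    by (simp add: powr_mult sum_distrib_left mult.commute)
  also have "\<dots> \<le> 1.84 * 2.5"
  proof (rule mult_mono)
    have "0 \<le> real (n+1) powr (-0.4)" by simp
    then have "2.5 * (1 - real (n+1) powr (-0.4)) \<le> 2.5" by simp
    then show "(\<Sum>j\<in>{1..n}. real (j+1) powr (-1.4)) \<le> 2.5" using sum_tele[of n] by linarith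
  qed (use ln2_powr in \<open>auto intro: sum_nonneg\<close>)
  finally show ?thesis by simp
qed

definition xv :: "bool \<Rightarrow> real" where "xv b = (if b then 1 else -1)"
definition Ss :: "bool list \<Rightarrow> nat \<Rightarrow> real" where "Ss bs k = (\<Sum>t<k. xv (bs!t))"
definition mk :: "real list \<Rightarrow> nat \<Rightarrow> real" where "mk qs k = (\<Sum>t<k. 2 * qs!t - 1)"
definition Ev :: "real \<Rightarrow> real list \<Rightarrow> bool list \<Rightarrow> bool" where
  "Ev \<alpha> qs bs \<longleftrightarrow> (\<exists>k\<in>{1..length qs}. Ccrit k \<alpha> * sqrt (real k) < Ss bs k)"

lemma mgf_ok: fixes q lam :: real assumes "0 \<le> q" "q \<le> 1"
  shows "q * exp (lam * (xv True - (2*q-1)) - lam^2/2) + (1-q) * exp (lam * (xv False - (2*q-1)) - lam^2/2) \<le> 1"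
proof -
  have "q * exp (lam * (xv True - (2*q-1)) - lam^2/2) + (1-q) * exp (lam * (xv False - (2*q-1)) - lam^2/2)
      = (q * exp (lam * (1 - (2*q-1))) + (1-q) * exp (lam * (-1 - (2*q-1)))) / exp (lam^2/2)"
    by (simp add: xv_def exp_diff add_divide_distrib)
  also have "\<dots> \<le> exp (lam^2/2) / exp (lam^2/2)"
    by (rule divide_right_mono) (use hoeff2[OF assms] in auto)
  finally show ?thesis by simp
qed

lemma sum_z: "(\<Sum>t<k. lam * (xv (bs!t) - (2 * qs!t - 1)) - lam^2/2) = lam * (Ss bs k - mk qs k) - real k * lam^2/2"
proof -
  have "(\<Sum>t<k. lam * (xv (bs!t) - (2 * qs!t - 1)) - lam^2/2) = (\<Sum>t<k. lam * (xv (bs!t) - (2 * qs!t - 1))) - (\<Sum>t<k. lam^2/2)"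
    by (rule sum_subtractf)
  also have "(\<Sum>t<k. lam * (xv (bs!t) - (2 * qs!t - 1))) = lam * (\<Sum>t<k. xv (bs!t) - (2 * qs!t - 1))"
    by (rule sum_distrib_left[symmetric])
  also have "(\<Sum>t<k. xv (bs!t) - (2 * qs!t - 1)) = Ss bs k - mk qs k"
    unfolding Ss_def mk_def by (rule sum_subtractf)
  also have "(\<Sum>t<k. lam^2/2) = real k * lam^2/2" by simp
  finally show ?thesis .
qed

lemma maximal_z:
  assumes "okq qs"
  shows "Pr qs (\<lambda>bs. \<exists>k\<le>length qs. thr \<le> 0 + (\<Sum>t<k. lam * (xv (bs!t) - (2 * qs!t - 1)) - lam^2/2))
         \<le> exp (0 - thr)"
  by (rule maximal[OF assms]) (use assms mgf_ok in \<open>auto simp: okq_def\<close>)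

lemma part1_Pr:
  assumes q: "okq qs" and k: "k \<in> {1..length qs}" and b: "0 < \<beta>" "\<beta> < 1"
    and sig: "(Ccrit k \<alpha> + Ccrit k \<beta>) * sqrt (real k) \<le> mk qs k"
  shows "1 - \<beta> \<le> Pr qs (Ev \<alpha> qs)"
proof -
  let ?C = "Ccrit k \<beta>"
  have k1: "1 \<le> k" using k by simp
  have Cpos: "0 < ?C" using C_gt1[OF k1 b] by simp
  have sk: "0 < sqrt (real k)" using k1 by simp
  define lam where "lam = ?C / sqrt (real k)"
  have lam0: "0 \<le> lam" unfolding lam_def using Cpos sk by simp
  have e1: "lam * ?C * sqrt (real k) = ?C^2" unfolding lam_def using sk by (simp add: power2_eq_square)
  have e2: "real k * lam^2 = ?C^2"
  proof -
    have "(sqrt (real k))^2 = real k" by simp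
    then show ?thesis unfolding lam_def power_divide using sk by simp
  qed
  have "Pr qs (\<lambda>bs. \<not> Ccrit k \<alpha> * sqrt (real k) < Ss bs k)
      \<le> Pr qs (\<lambda>bs. \<exists>k'\<le>length qs. ?C^2/2 \<le> 0 + (\<Sum>t<k'. (- lam) * (xv (bs!t) - (2 * qs!t - 1)) - (- lam)^2/2))"
  proof (rule Pr_mono[OF q])
    fix bs assume "\<not> Ccrit k \<alpha> * sqrt (real k) < Ss bs k"
    then have "Ss bs k - mk qs k \<le> - (?C * sqrt (real k))" using sig by (simp add: algebra_simps)
    then have "(- lam) * (- (?C * sqrt (real k))) \<le> (- lam) * (Ss bs k - mk qs k)"
      using lam0 by (intro mult_left_mono_neg) auto
    moreover have "(- lam) * (- (?C * sqrt (real k))) = ?C^2" using e1 by (simp add: mult.assoc)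
    moreover have "real k * (- lam)^2/2 = ?C^2/2" using e2 by simp
    ultimately have H: "?C^2/2 \<le> (- lam) * (Ss bs k - mk qs k) - real k * (- lam)^2/2"
      by linarith
    then show "\<exists>k'\<le>length qs. ?C^2/2 \<le> 0 + (\<Sum>t<k'. (- lam) * (xv (bs!t) - (2 * qs!t - 1)) - (- lam)^2/2)"
      unfolding sum_z using k H by (intro exI[of _ k]) simp
  qed
  also have "\<dots> \<le> exp (0 - ?C^2/2)" by (rule maximal_z[OF q])
  also have "\<dots> \<le> \<beta>" using part1_num[OF k1 b] by simp
  finally have A: "Pr qs (\<lambda>bs. \<not> Ccrit k \<alpha> * sqrt (real k) < Ss bs k) \<le> \<beta>" .
  have "Pr qs (\<lambda>bs. Ccrit k \<alpha> * sqrt (real k) < Ss bs k) \<le> Pr qs (Ev \<alpha> qs)"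
    by (rule Pr_mono[OF q]) (use k in \<open>auto simp: Ev_def\<close>)
  then show ?thesis using A Pr_compl[of qs "\<lambda>bs. Ccrit k \<alpha> * sqrt (real k) < Ss bs k"] by linarith
qed

lemma chord:
  fixes c m k :: real
  assumes "0 \<le> c" "1 \<le> m" "m \<le> k" "k \<le> 2*m"
  shows "c * sqrt m * (2 - sqrt 2) + c * (sqrt 2 - 1) / sqrt m * k \<le> c * sqrt k"
proof -
  define w where "w = sqrt (2::real)"
  define r where "r = sqrt m"
  define sv where "sv = sqrt k"
  have ww: "w*w = 2" unfolding w_def by simp
  have w1: "1 \<le> w" unfolding w_def by simp
  have r0: "0 < r" unfolding r_def using assms by simp
  have rs: "r \<le> sv" unfolding r_def sv_def using assms by simp
  have sw: "sv \<le> w * r" unfolding r_def sv_def w_def using assms by (simp add: real_sqrt_mult[symmetric])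
  have rr: "r*r = m" unfolding r_def using assms by simp
  have ss: "sv * sv = k" unfolding sv_def using assms by simp
  have "(w-1)*(sv-r)*(sv-w*r) \<le> 0"
    using w1 rs sw by (intro mult_nonneg_nonpos mult_nonneg_nonneg) auto
  moreover have "(w-1)*(sv-r)*(sv-w*r) = (w-1)*(sv * sv) - (w*w-1)*r * sv + (w*w - w)*(r*r)"
    by (simp add: algebra_simps)
  ultimately have "(w-1)*k + (2-w)*m \<le> r * sv" using ww rr ss by (simp add: algebra_simps)
  then have "((w-1)*k + (2-w)*m) / r \<le> sv" using r0 by (simp add: divide_le_eq mult.commute)
  moreover have "((w-1)*k + (2-w)*m) / r = r * (2 - w) + (w - 1) / r * k"
    using r0 rr[symmetric] by (simp add: field_simps)
  ultimately have "r * (2 - w) + (w - 1) / r * k \<le> sv" by simp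
  then have "c * (r * (2 - w) + (w - 1) / r * k) \<le> c * sv" using assms(1) by (rule mult_left_mono)
  then show ?thesis unfolding w_def[symmetric] r_def[symmetric] sv_def[symmetric] by (simp add: algebra_simps)
qed

lemma part2_Pr:
  assumes q: "okq qs" and half: "\<forall>t<length qs. 1/2 \<le> qs!t" and g: "0 < \<gamma>" "\<gamma> < 1"
    and sig: "\<forall>k\<in>{1..length qs}. mk qs k \<le> (Ccrit k \<alpha> - Ccrit k \<gamma>) * sqrt (real k)"
  shows "Pr qs (Ev \<alpha> qs) < \<gamma>"
proof -
  let ?n = "length qs"
  define c where "c j = Ccrit (2^j) \<gamma>" for j
  define m where "m j = (2::real)^j" for j
  define bb where "bb j = c j * (sqrt 2 - 1) / sqrt (m j)" for j
  define aa where "aa j = c j * sqrt (m j) * (2 - sqrt 2)" for j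
  define lam where "lam j = 2 * bb j" for j
  define thr where "thr j = kap * (c j)^2" for j
  define G where "G j bs = (\<exists>k\<le>?n. thr j \<le> 0 + (\<Sum>t<k. lam j * (xv (bs!t) - (2 * qs!t - 1)) - (lam j)^2/2))" for j bs
  have cover: "\<exists>j\<in>{1..?n}. G j bs" if ev: "Ev \<alpha> qs bs" for bs
  proof -
    obtain k where k: "k \<in> {1..?n}" "Ccrit k \<alpha> * sqrt (real k) < Ss bs k" using ev by (auto simp: Ev_def)
    have "mk qs k \<le> Ccrit k \<alpha> * sqrt (real k) - Ccrit k \<gamma> * sqrt (real k)"
      using sig k(1) by (simp add: left_diff_distrib)
    then have D: "Ccrit k \<gamma> * sqrt (real k) < Ss bs k - mk qs k" using k(2) by linarith
    have k2: "2 \<le> k"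
    proof (rule ccontr)
      assume "\<not> 2 \<le> k"
      then have k1: "k = 1" using k by auto
      have "Ss bs 1 \<le> 1" by (simp add: Ss_def xv_def)
      moreover have "0 \<le> mk qs 1"
      proof -
        have "0 < ?n" using k(1) by (simp del: length_greater_0_conv)
        then have "1/2 \<le> qs!0" using half by simp
        then show ?thesis by (simp add: mk_def)
      qed
      moreover have "1 < Ccrit 1 \<gamma>" by (rule C_gt1) (use g in auto)
      ultimately show False using D k1 by simp
    qed
    obtain j where j: "2^j \<le> k" "k < 2^(j+1)" using ex_power_ivl1[of 2 k] k2 by auto
    have j1: "1 \<le> j"
    proof (rule ccontr)
      assume "\<not> 1 \<le> j" then have "j = 0" by simp
      then show False using j k2 by simp
    qed
    have jn: "j \<le> ?n"
    proof -
      have "j < 2^j" by (rule less_exp)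
      then have "j \<le> k" using j(1) by linarith
      then show ?thesis using k(1) by simp
    qed
    have p1: "1 \<le> (2::nat)^j" by simp
    have cpos: "0 \<le> c j" unfolding c_def using C_gt1[OF p1 g] by simp
    have mj: "m j = real (2^j)" unfolding m_def by simp
    have m1: "1 \<le> m j" unfolding m_def by simp
    have mk1: "m j \<le> real k" unfolding mj using j(1) by (simp only: of_nat_le_iff)
    have mk2: "real k \<le> 2 * m j"
    proof -
      have "k \<le> 2 * 2^j" using j(2) by simp
      then have "real k \<le> real (2 * 2^j)" by (simp only: of_nat_le_iff)
      then show ?thesis unfolding mj by simp
    qed
    have ch: "aa j + bb j * real k \<le> c j * sqrt (real k)"
      unfolding aa_def bb_def using chord[OF cpos m1 mk1 mk2] by simp
    have cm: "c j \<le> Ccrit k \<gamma>" unfolding c_def by (rule C_mono) (use j p1 in auto)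
    then have "c j * sqrt (real k) \<le> Ccrit k \<gamma> * sqrt (real k)" by (rule mult_right_mono) simp
    then have Dv: "aa j + bb j * real k \<le> Ss bs k - mk qs k" using ch D by linarith
    have bpos: "0 \<le> bb j" unfolding bb_def using cpos m1 by simp
    have w: "sqrt 2 * sqrt (2::real) = 2" by simp
    have sm: "sqrt (m j) * sqrt (m j) = m j" using m1 by simp
    have sp: "0 < sqrt (m j)" using m1 by simp
    have ab1: "aa j * bb j = c j * c j * ((2 - sqrt 2) * (sqrt 2 - 1))"
      using sp unfolding aa_def bb_def by (simp add: field_simps)
    have ab2: "(2 - sqrt 2) * (sqrt 2 - 1) = 3 * sqrt 2 - (4::real)"
      using w by (simp add: algebra_simps)
    have ab: "2 * aa j * bb j = thr j"
    proof -
      have "2 * aa j * bb j = 2 * (aa j * bb j)" by simp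
      also have "\<dots> = 2 * (3 * sqrt 2 - 4) * (c j * c j)" using ab1 ab2 by simp
      finally show ?thesis unfolding thr_def kap_def power2_eq_square .
    qed
    have "2 * bb j * (aa j + bb j * real k) \<le> 2 * bb j * (Ss bs k - mk qs k)"
      using Dv bpos by (intro mult_left_mono) auto
    moreover have "real k * (lam j)^2/2 = 2 * bb j * (bb j * real k)"
      unfolding lam_def by (simp add: power2_eq_square algebra_simps)
    ultimately have H: "thr j \<le> lam j * (Ss bs k - mk qs k) - real k * (lam j)^2/2"
      using ab unfolding lam_def by (simp add: algebra_simps power2_eq_square)
    have "G j bs" unfolding G_def sum_z using H k(1) by (intro exI[of _ k]) simp
    then show ?thesis using j1 jn by auto
  qed
  have "Pr qs (Ev \<alpha> qs) \<le> Pr qs (\<lambda>bs. \<exists>j\<in>{1..?n}. G j bs)"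
    by (rule Pr_mono[OF q]) (use cover in auto)
  also have "\<dots> \<le> (\<Sum>j\<in>{1..?n}. Pr qs (G j))" by (rule Pr_union[OF q]) simp
  also have "\<dots> \<le> (\<Sum>j\<in>{1..?n}. exp (0 - thr j))"
    by (rule sum_mono) (unfold G_def, rule maximal_z[OF q])
  also have "\<dots> \<le> (\<Sum>j\<in>{1..?n}. (real (j+1) * ln 2) powr (-1.4) * (\<gamma>/5.2))"
  proof (rule sum_mono)
    fix j assume "j \<in> {1..?n}"
    then have "1 \<le> j" by simp
    then show "exp (0 - thr j) \<le> (real (j+1) * ln 2) powr (-1.4) * (\<gamma>/5.2)"
      using epoch_num[OF _ g] unfolding thr_def c_def by simp
  qed
  also have "\<dots> = (\<Sum>j\<in>{1..?n}. (real (j+1) * ln 2) powr (-1.4)) * (\<gamma>/5.2)"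
    by (rule sum_distrib_right[symmetric])
  also have "\<dots> < 5.2 * (\<gamma>/5.2)"
    by (rule mult_strict_right_mono[OF sum_bound]) (use g in simp)
  finally show ?thesis by simp
qed

abbreviation ND :: "real \<Rightarrow> real measure" where
  "ND m \<equiv> density lborel (\<lambda>x. ennreal (normal_density m 1 x))"

lemma ND_prob: "prob_space (ND m)"
  by (rule prob_space_normal_density) simp

lemma sets_ND[simp]: "sets (ND m) = sets borel" by simp
lemma space_ND[simp]: "space (ND m) = UNIV" by simp

lemma emeasure_ND: "A \<in> sets borel \<Longrightarrow> emeasure (ND m) A = (\<integral>\<^sup>+x. ennreal (normal_density m 1 x) * indicator A x \<partial>lborel)"
  by (subst emeasure_density) auto

lemma reflect:
  assumes A: "A \<in> sets borel" and B: "B \<in> sets borel" and AB: "\<And>x. x \<in> B \<longleftrightarrow> -x \<in> A"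
    and le: "\<And>x. x \<in> B \<Longrightarrow> normal_density m 1 (-x) \<le> normal_density m 1 x"
  shows "emeasure (ND m) A \<le> emeasure (ND m) B"
proof -
  let ?g = "\<lambda>x. ennreal (normal_density m 1 x) * indicator A x"
  have gm: "?g \<in> borel_measurable borel" using A by measurable
  have "emeasure (ND m) A = (\<integral>\<^sup>+x. ?g x \<partial>lborel)" using emeasure_ND[OF A] .
  also have "\<dots> = (\<integral>\<^sup>+x. ?g x \<partial>(distr lborel borel uminus))" by (simp add: lborel_distr_uminus)
  also have "\<dots> = (\<integral>\<^sup>+x. ?g (-x) \<partial>lborel)"
    by (rule nn_integral_distr) (use gm in auto)
  also have "\<dots> \<le> (\<integral>\<^sup>+x. ennreal (normal_density m 1 x) * indicator B x \<partial>lborel)"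
  proof (rule nn_integral_mono)
    fix x :: real
    show "?g (-x) \<le> ennreal (normal_density m 1 x) * indicator B x"
    proof (cases "x \<in> B")
      case True
      then have "-x \<in> A" using AB by simp
      then show ?thesis using True le[OF True] by (simp add: indicator_def)
    next
      case False
      then have "-x \<notin> A" using AB by simp
      then show ?thesis by (simp add: indicator_def)
    qed
  qed
  also have "\<dots> = emeasure (ND m) B" using emeasure_ND[OF B] by simp
  finally show ?thesis .
qed

lemma nd_le: assumes "0 \<le> m" "0 \<le> x" shows "normal_density m 1 (-x) \<le> normal_density m 1 x"
proof -
  have "(x - m)^2 \<le> (-x - m)^2" using assms by (simp add: power2_eq_square algebra_simps)
  then show ?thesis unfolding normal_density_def by (intro mult_left_mono) auto
qed

lemma sing_ND: "emeasure (ND m) {c} = 0"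
proof -
  have "emeasure (ND m) {c} = (\<integral>\<^sup>+x. ennreal (normal_density m 1 x) * indicator {c} x \<partial>lborel)"
    by (rule emeasure_ND) simp
  also have "\<dots> = (\<integral>\<^sup>+x. ennreal (normal_density m 1 x * indicator {c} x) \<partial>lborel)"
    by (rule nn_integral_cong) (simp add: indicator_def)
  also have "\<dots> = ennreal (normal_density m 1 c) * emeasure lborel {c}"
    by (rule nn_integral_indicator_singleton') simp
  finally show ?thesis by simp
qed

lemma split3: "measure (ND m) {..<0} + measure (ND m) {0<..} = 1"
proof -
  interpret D: prob_space "ND m" by (rule ND_prob)
  have "UNIV = ({..<0} \<union> {0}) \<union> {0::real<..}" by auto
  then have "1 = measure (ND m) (({..<0} \<union> {0}) \<union> {0<..})" using D.prob_space by simp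
  also have "\<dots> = measure (ND m) {..<0} + measure (ND m) {0} + measure (ND m) {0<..}"
    by (subst D.finite_measure_Union; (subst D.finite_measure_Union)?) auto
  also have "measure (ND m) {0} = 0" using sing_ND by (simp add: measure_def)
  finally show ?thesis by simp
qed

lemma meas_le: assumes "emeasure (ND m) A \<le> emeasure (ND m) B" shows "measure (ND m) A \<le> measure (ND m) B"
proof -
  interpret D: prob_space "ND m" by (rule ND_prob)
  show ?thesis using assms by (simp add: D.emeasure_eq_measure)
qed

lemma half_pos: assumes "0 \<le> m" shows "1/2 \<le> measure (ND m) {0<..}"
proof -
  have "emeasure (ND m) {..<0} \<le> emeasure (ND m) {0<..}"
    by (rule reflect) (use nd_le[OF assms] in auto)
  then have "measure (ND m) {..<0} \<le> measure (ND m) {0<..}" by (rule meas_le)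
  then show ?thesis using split3[of m] by simp
qed

lemma half_neg: "measure (ND 0) {..<0} = 1/2"
proof -
  have "emeasure (ND 0) {0<..} \<le> emeasure (ND 0) {..<0}"
    by (rule reflect) (auto simp: normal_density_def)
  then have "measure (ND 0) {0<..} \<le> measure (ND 0) {..<0}" by (rule meas_le)
  moreover have "emeasure (ND 0) {..<0} \<le> emeasure (ND 0) {0<..}"
    by (rule reflect) (auto simp: normal_density_def)
  then have "measure (ND 0) {..<0} \<le> measure (ND 0) {0<..}" by (rule meas_le)
  ultimately show ?thesis using split3[of 0] by simp
qed

lemma Phi_gt: assumes "0 < z" shows "1/2 < Phi z"
proof -
  interpret D: prob_space "ND 0" by (rule ND_prob)
  have Phi: "Phi z = measure (ND 0) {..z}" unfolding Phi_def by simp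
  have eqs: "{..z} = ({..<0} \<union> {0}) \<union> {0<..z}" using assms by auto
  have "measure (ND 0) (({..<0} \<union> {0}) \<union> {0<..z}) = measure (ND 0) {..<0} + measure (ND 0) {0} + measure (ND 0) {0<..z}"
    by (subst D.finite_measure_Union; (subst D.finite_measure_Union)?) auto
  then have "measure (ND 0) {..z} = measure (ND 0) {..<0} + measure (ND 0) {0} + measure (ND 0) {0<..z}"
    unfolding eqs[symmetric] .
  also have "measure (ND 0) {0} = 0" using sing_ND by (simp add: measure_def)
  finally have e: "Phi z = 1/2 + measure (ND 0) {0<..z}" using Phi half_neg by simp
  have "ennreal (normal_density 0 1 z) * ennreal z \<le> emeasure (ND 0) {0<..z}"
  proof -
    have "ennreal (normal_density 0 1 z) * ennreal z = (\<integral>\<^sup>+x. ennreal (normal_density 0 1 z) * indicator {0<..z} x \<partial>lborel)"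
      using assms by (simp add: nn_integral_cmult_indicator)
    also have "\<dots> \<le> (\<integral>\<^sup>+x. ennreal (normal_density 0 1 x) * indicator {0<..z} x \<partial>lborel)"
    proof (rule nn_integral_mono)
      fix x :: real
      show "ennreal (normal_density 0 1 z) * indicator {0<..z} x \<le> ennreal (normal_density 0 1 x) * indicator {0<..z} x"
      proof (cases "x \<in> {0<..z}")
        case True
        then have "x^2 \<le> z^2" by (intro power_mono) auto
        then have "normal_density 0 1 z \<le> normal_density 0 1 x" unfolding normal_density_def by (intro mult_left_mono) auto
        then show ?thesis using True by (simp add: indicator_def)
      qed (auto simp: indicator_def)
    qed
    also have "\<dots> = emeasure (ND 0) {0<..z}" by (rule emeasure_ND[symmetric]) simp
    finally show ?thesis .
  qed
  moreover have "0 < normal_density 0 1 z" by (rule normal_density_pos) simp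
  ultimately have "0 < emeasure (ND 0) {0<..z}"
  proof -
    assume a: "ennreal (normal_density 0 1 z) * ennreal z \<le> emeasure (ND 0) {0<..z}" "0 < normal_density 0 1 z"
    have "ennreal (normal_density 0 1 z) * ennreal z = ennreal (normal_density 0 1 z * z)"
      using a(2) assms by (simp add: ennreal_mult)
    moreover have "0 < ennreal (normal_density 0 1 z * z)" using a(2) assms by simp
    ultimately show ?thesis using a(1) by (metis order.strict_trans2)
  qed
  then have "0 < measure (ND 0) {0<..z}" by (simp add: D.emeasure_eq_measure)
  then show ?thesis using e by simp
qed

lemma Phi_mono: "mono Phi"
proof
  interpret D: prob_space "ND 0" by (rule ND_prob)
  fix x y :: real assume "x \<le> y"
  then show "Phi x \<le> Phi y" unfolding Phi_def by (intro D.finite_measure_mono) auto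
qed

lemma Phi_meas: "Phi \<in> borel_measurable borel"
  by (rule borel_measurable_mono[OF Phi_mono])

lemma ph_set: "{z. 1/2 < Phi z} \<in> sets borel"
proof -
  have "\<forall>a. {w. a < Phi w} \<in> sets borel" using Phi_meas unfolding borel_measurable_iff_greater by simp
  then show ?thesis by blast
qed

lemma q_half: assumes "0 \<le> m" shows "1/2 \<le> measure (ND m) {z. 1/2 < Phi z}"
proof -
  interpret D: prob_space "ND m" by (rule ND_prob)
  have "measure (ND m) {0<..} \<le> measure (ND m) {z. 1/2 < Phi z}"
    by (rule D.finite_measure_mono) (use Phi_gt ph_set in auto)
  then show ?thesis using half_pos[OF assms] by simp
qed

lemma Zmodel_eq: "Zmodel n \<mu> = (\<Pi>\<^sub>M i\<in>{1..n}. ND (\<mu> i))"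
  unfolding Zmodel_def ..

lemma fpps: "finite_product_prob_space (\<lambda>i. ND (\<mu> i)) {1..(n::nat)}"
proof -
  interpret product_prob_space "\<lambda>i. ND (\<mu> i)"
    by (intro product_prob_spaceI) (rule ND_prob)
  show ?thesis by unfold_locales simp
qed

lemma Z_prob: "prob_space (Zmodel n \<mu>)"
  unfolding Zmodel_eq by (intro prob_space_PiM ND_prob)

abbreviation ph :: "real \<Rightarrow> bool" where "ph z \<equiv> 1/2 < Phi z"

definition qv :: "(nat \<Rightarrow> real) \<Rightarrow> nat \<Rightarrow> real" where
  "qv \<mu> i = measure (ND (\<mu> i)) {z. ph z}"

lemma ph_meas[measurable]: "{z. ph z} \<in> sets borel" by (rule ph_set)

definition Aset :: "nat list \<Rightarrow> bool list \<Rightarrow> nat \<Rightarrow> real set" where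
  "Aset js bs i = {z. \<forall>t<length js. js!t = i \<longrightarrow> ph z = bs!t}"

lemma Aset_meas: "Aset js bs i \<in> sets borel"
proof -
  have "Aset js bs i = (\<Inter>t\<in>{t. t < length js \<and> js!t = i}. {z. ph z = bs!t})"
    unfolding Aset_def by auto
  also have "\<dots> \<in> sets borel"
  proof (cases "{t. t < length js \<and> js!t = i} = {}")
    case True
    have e: "(\<Inter>t\<in>{t. t < length js \<and> js!t = i}. {z. ph z = bs!t}) = UNIV" using True by auto
    show ?thesis unfolding e by simp
  next
    case False
    have "{z. ph z = bs!t} \<in> sets borel" for t
    proof (cases "bs!t")
      case True then show ?thesis using ph_set by simp
    next
      case False
      have "{z. ph z = bs!t} = UNIV - {z. ph z}" using False by auto
      then show ?thesis using ph_set by auto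
    qed
    then show ?thesis using False by (intro sets.finite_INT) auto
  qed
  finally show ?thesis .
qed

lemma box_set:
  assumes "set js \<subseteq> {1..n}" "length bs = length js"
  shows "{\<omega>\<in>space (Zmodel n \<mu>). map (\<lambda>j. ph (\<omega> j)) js = bs} = PiE {1..n} (Aset js bs)"
proof -
  have sp: "space (Zmodel n \<mu>) = PiE {1..n} (\<lambda>_. UNIV)" unfolding Zmodel_eq by (simp add: space_PiM)
  show ?thesis
  proof (intro set_eqI iffI)
    fix \<omega> assume "\<omega> \<in> {\<omega>\<in>space (Zmodel n \<mu>). map (\<lambda>j. ph (\<omega> j)) js = bs}"
    then have w: "\<omega> \<in> PiE {1..n} (\<lambda>_. UNIV)" "\<forall>t<length js. ph (\<omega> (js!t)) = bs!t"
      using sp assms(2) by (auto simp: list_eq_iff_nth_eq)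
    then show "\<omega> \<in> PiE {1..n} (Aset js bs)" unfolding Aset_def by (auto simp: PiE_iff)
  next
    fix \<omega> assume w: "\<omega> \<in> PiE {1..n} (Aset js bs)"
    have "\<forall>t<length js. ph (\<omega> (js!t)) = bs!t"
    proof (intro allI impI)
      fix t assume t: "t < length js"
      then have "js!t \<in> {1..n}" using assms(1) nth_mem by blast
      then have "\<omega> (js!t) \<in> Aset js bs (js!t)" using w by (auto simp: PiE_iff)
      then show "ph (\<omega> (js!t)) = bs!t" using t unfolding Aset_def by auto
    qed
    moreover have "\<omega> \<in> space (Zmodel n \<mu>)" using w sp by (auto simp: PiE_iff)
    ultimately show "\<omega> \<in> {\<omega>\<in>space (Zmodel n \<mu>). map (\<lambda>j. ph (\<omega> j)) js = bs}"
      using assms(2) by (auto simp: list_eq_iff_nth_eq)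
  qed
qed

lemma box_meas:
  assumes "distinct js" "set js \<subseteq> {1..n}" "length bs = length js"
  shows "measure (Zmodel n \<mu>) {\<omega>\<in>space (Zmodel n \<mu>). map (\<lambda>j. ph (\<omega> j)) js = bs} = wt (map (qv \<mu>) js) bs"
proof -
  interpret F: finite_product_prob_space "\<lambda>i. ND (\<mu> i)" "{1..n}" by (rule fpps)
  have "measure (Zmodel n \<mu>) {\<omega>\<in>space (Zmodel n \<mu>). map (\<lambda>j. ph (\<omega> j)) js = bs}
      = measure (Zmodel n \<mu>) (PiE {1..n} (Aset js bs))"
    using box_set[OF assms(2,3)] by simp
  also have "\<dots> = (\<Prod>i\<in>{1..n}. measure (ND (\<mu> i)) (Aset js bs i))"
    unfolding Zmodel_eq by (rule F.prob_times) (simp add: Aset_meas)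
  also have "\<dots> = (\<Prod>i\<in>set js. measure (ND (\<mu> i)) (Aset js bs i))"
  proof (rule prod.mono_neutral_right)
    show "\<forall>i\<in>{1..n} - set js. measure (ND (\<mu> i)) (Aset js bs i) = 1"
    proof
      fix i assume "i \<in> {1..n} - set js"
      then have "Aset js bs i = UNIV" unfolding Aset_def by (auto simp: in_set_conv_nth)
      then show "measure (ND (\<mu> i)) (Aset js bs i) = 1"
        using prob_space.prob_space[OF ND_prob[of "\<mu> i"]] by simp
    qed
  qed (use assms in auto)
  also have "\<dots> = (\<Prod>t\<in>{0..<length js}. measure (ND (\<mu> (js!t))) (Aset js bs (js!t)))"
    using prod.reindex[OF inj_on_nth[OF assms(1), of "{0..<length js}"], of "\<lambda>i. measure (ND (\<mu> i)) (Aset js bs i)"]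
      nth_image[of "length js" js] by simp
  also have "\<dots> = wt (map (qv \<mu>) js) bs"
    unfolding wt_def lessThan_atLeast0
  proof (rule prod.cong)
    show "{0..<length js} = {0..<length (map (qv \<mu>) js)}" by simp
  next
    fix t assume t: "t \<in> {0..<length (map (qv \<mu>) js)}"
    have "Aset js bs (js!t) = {z. ph z = bs!t}"
      using t assms(1) unfolding Aset_def by (auto simp: nth_eq_iff_index_eq)
    moreover have "measure (ND (\<mu> (js!t))) {z. \<not> ph z} = 1 - qv \<mu> (js!t)"
    proof -
      have "{z. \<not> ph z} = space (ND (\<mu> (js!t))) - {z. ph z}" by auto
      then show ?thesis unfolding qv_def using prob_space.prob_compl[OF ND_prob[of "\<mu> (js!t)"], of "{z. ph z}"] ph_set by simp
    qed
    ultimately show "measure (ND (\<mu> (js!t))) (Aset js bs (js!t)) =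
        (if bs!t then map (qv \<mu>) js ! t else 1 - map (qv \<mu>) js ! t)"
      using t by (auto simp: qv_def)
  qed
  finally show ?thesis .
qed

lemma event_meas:
  assumes "distinct js" "set js \<subseteq> {1..n}"
  shows "measure (Zmodel n \<mu>) {\<omega>\<in>space (Zmodel n \<mu>). E (map (\<lambda>j. ph (\<omega> j)) js)} = Pr (map (qv \<mu>) js) E"
proof -
  interpret Z: prob_space "Zmodel n \<mu>" by (rule Z_prob)
  let ?B = "{bs. length bs = length js \<and> E bs}"
  let ?F = "\<lambda>bs. {\<omega>\<in>space (Zmodel n \<mu>). map (\<lambda>j. ph (\<omega> j)) js = bs}"
  have eq: "{\<omega>\<in>space (Zmodel n \<mu>). E (map (\<lambda>j. ph (\<omega> j)) js)} = (\<Union>bs\<in>?B. ?F bs)" by auto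
  have Fs: "?F bs \<in> sets (Zmodel n \<mu>)" if "bs \<in> ?B" for bs
  proof -
    have "?F bs = PiE {1..n} (Aset js bs)" using box_set[OF assms(2)] that by simp
    also have "\<dots> \<in> sets (Zmodel n \<mu>)" unfolding Zmodel_eq
      by (rule sets_PiM_I_finite) (simp_all add: Aset_meas)
    finally show ?thesis .
  qed
  have "measure (Zmodel n \<mu>) (\<Union>bs\<in>?B. ?F bs) = (\<Sum>bs\<in>?B. measure (Zmodel n \<mu>) (?F bs))"
    by (rule Z.finite_measure_finite_Union) (use Fs finite_len in \<open>auto simp: disjoint_family_on_def\<close>)
  also have "\<dots> = (\<Sum>bs\<in>?B. wt (map (qv \<mu>) js) bs)"
    by (rule sum.cong) (use box_meas[OF assms] in auto)
  also have "\<dots> = Pr (map (qv \<mu>) js) E" unfolding Pr_def by simp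
  finally show ?thesis using eq by simp
qed

lemma nested_list:
  assumes A: "\<forall>k\<in>{1..n}. M k \<subseteq> {1..n} \<and> card (M k) = k"
    and B: "\<forall>k. 1 \<le> k \<and> k < n \<longrightarrow> M k \<subset> M (Suc k)"
  shows "\<exists>js. length js = n \<and> distinct js \<and> set js \<subseteq> {1..n} \<and> (\<forall>k\<in>{1..n}. M k = set (take k js))"
proof -
  have "\<exists>js. length js = m \<and> distinct js \<and> (\<forall>k\<in>{1..m}. M k = set (take k js))" if "m \<le> n" for m
    using that
  proof (induction m)
    case 0 then show ?case by auto
  next
    case (Suc m)
    then obtain js where js: "length js = m" "distinct js" "\<forall>k\<in>{1..m}. M k = set (take k js)" by auto
    have cS: "card (M (Suc m)) = Suc m" using A Suc.prems by auto
    then have fS: "finite (M (Suc m))" by (metis card.infinite nat.simps(3))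
    obtain x where x: "M (Suc m) = insert x (set js)" "x \<notin> set js"
    proof (cases m)
      case 0
      then have "card (M (Suc m)) = 1" using cS by simp
      then obtain x where "M (Suc m) = {x}" by (rule card_1_singletonE)
      then show ?thesis using that 0 js(1) by simp
    next
      case (Suc m')
      have sub: "M m \<subset> M (Suc m)" using B Suc Suc.prems by auto
      have Mm: "M m = set js" using js Suc by (metis atLeastAtMost_iff le_add1 order_refl plus_1_eq_Suc take_all)
      have cm: "card (M m) = m" using A Suc Suc.prems by auto
      have "card (M (Suc m) - M m) = 1"
        using card_Diff_subset[of "M m" "M (Suc m)"] sub fS cS cm finite_subset[of "M m" "M (Suc m)"] by auto
      then obtain x where xe: "M (Suc m) - M m = {x}" by (rule card_1_singletonE)
      then have "M (Suc m) = insert x (M m)" "x \<notin> M m" using sub by auto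
      then show ?thesis using that Mm by simp
    qed
    show ?case
    proof (intro exI[of _ "js @ [x]"] conjI ballI)
      show "length (js @ [x]) = Suc m" using js by simp
      show "distinct (js @ [x])" using js x by simp
      fix k assume k: "k \<in> {1..Suc m}"
      show "M k = set (take k (js @ [x]))"
      proof (cases "k \<le> m")
        case True then show ?thesis using js k by simp
      next
        case False then have "k = Suc m" using k by simp
        then show ?thesis using x js by simp
      qed
    qed
  qed
  then obtain js where js: "length js = n" "distinct js" "\<forall>k\<in>{1..n}. M k = set (take k js)" by blast
  have "set js \<subseteq> {1..n}"
  proof (cases n)
    case 0 then show ?thesis using js by simp
  next
    case (Suc n')
    then have "M n = set js" using js by (metis atLeastAtMost_iff le_add1 order_refl plus_1_eq_Suc take_all)
    moreover have "n \<in> {1..n}" using Suc by simp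
    then have "M n \<subseteq> {1..n}" using A by blast
    ultimately show ?thesis by simp
  qed
  then show ?thesis using js by blast
qed

lemma sum_take:
  assumes "distinct js" "k \<le> length js"
  shows "sum f (set (take k js)) = (\<Sum>t<k. f (js!t))"
proof -
  have "sum f (set (take k js)) = sum f ((!) js ` {0..<k})" using nth_image[OF assms(2)] by simp
  also have "\<dots> = (\<Sum>t\<in>{0..<k}. f (js!t))"
    by (rule sum.reindex_cong[OF inj_on_nth[OF assms(1)]]) (use assms(2) in auto)
  finally show ?thesis by (simp add: lessThan_atLeast0)
qed

lemma hp: "hfun (pval z) = xv (ph z)"
  unfolding hfun_def pval_def xv_def by auto

lemma Sfun_val:
  assumes i: "i \<in> {1..n}"
  shows "Sfun n \<mu> i (rind \<mu> i) = qv \<mu> i"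
proof -
  interpret Z: prob_space "Zmodel n \<mu>" by (rule Z_prob)
  have "{\<omega>\<in>space (Zmodel n \<mu>). hfun (pval (\<omega> i)) = 1 \<and> rind \<mu> i = rind \<mu> i}
      = {\<omega>\<in>space (Zmodel n \<mu>). map (\<lambda>j. ph (\<omega> j)) [i] = [True]}"
    by (auto simp: hp xv_def)
  moreover have "measure (Zmodel n \<mu>) {\<omega>\<in>space (Zmodel n \<mu>). map (\<lambda>j. ph (\<omega> j)) [i] = [True]} = qv \<mu> i"
    using box_meas[of "[i]" n "[True]" \<mu>] i by (simp add: wt_def)
  ultimately show ?thesis unfolding Sfun_def cond_prob_def by (simp add: Z.prob_space)
qed

lemma signal_val:
  assumes js: "distinct js" "set js \<subseteq> {1..n}" "length js = n" and k: "k \<in> {1..n}" and Mk: "M k = set (take k js)"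
  shows "signal n \<mu> M k = mk (map (qv \<mu>) js) k"
proof -
  have tm: "rind \<mu> i * (2 * Sfun n \<mu> i 1 - 1) + (1 - rind \<mu> i) * (2 * Sfun n \<mu> i 0 - 1) = 2 * qv \<mu> i - 1"
    if "i \<in> {1..n}" for i
  proof (cases "\<mu> i > 0")
    case True
    then have "rind \<mu> i = 1" by (simp add: rind_def)
    then show ?thesis using Sfun_val[OF that, of \<mu>] by simp
  next
    case False
    then have "rind \<mu> i = 0" by (simp add: rind_def)
    then show ?thesis using Sfun_val[OF that, of \<mu>] by simp
  qed
  have kl: "k \<le> length js" using k js by simp
  have sub: "set (take k js) \<subseteq> {1..n}" using js set_take_subset by fastforce
  have "signal n \<mu> M k = (\<Sum>i\<in>set (take k js). 2 * qv \<mu> i - 1)"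
    unfolding signal_def Mk by (rule sum.cong) (use tm sub in auto)
  also have "\<dots> = (\<Sum>t<k. 2 * qv \<mu> (js!t) - 1)" by (rule sum_take[OF js(1) kl])
  also have "\<dots> = mk (map (qv \<mu>) js) k" unfolding mk_def using kl by (intro sum.cong) auto
  finally show ?thesis .
qed

lemma power_val:
  assumes js: "distinct js" "set js \<subseteq> {1..n}" "length js = n" and Mk: "\<forall>k\<in>{1..n}. M k = set (take k js)"
  shows "power n \<mu> M \<alpha> = Pr (map (qv \<mu>) js) (Ev \<alpha> (map (qv \<mu>) js))"
proof -
  have "{\<omega> \<in> space (Zmodel n \<mu>). \<exists>k\<in>{1..n}. (\<Sum>i\<in>M k. hfun (pval (\<omega> i))) > Ccrit k \<alpha> * sqrt (real k)}
      = {\<omega> \<in> space (Zmodel n \<mu>). Ev \<alpha> (map (qv \<mu>) js) (map (\<lambda>j. ph (\<omega> j)) js)}"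
  proof -
    have "(\<Sum>i\<in>M k. hfun (pval (\<omega> i))) = Ss (map (\<lambda>j. ph (\<omega> j)) js) k" if k: "k \<in> {1..n}" for k \<omega>
    proof -
      have kl: "k \<le> length js" using k js by simp
      have "(\<Sum>i\<in>M k. hfun (pval (\<omega> i))) = (\<Sum>t<k. hfun (pval (\<omega> (js!t))))"
        unfolding Mk[rule_format, OF k] by (rule sum_take[OF js(1) kl])
      also have "\<dots> = Ss (map (\<lambda>j. ph (\<omega> j)) js) k" unfolding Ss_def hp using kl by (intro sum.cong) auto
      finally show ?thesis .
    qed
    then show ?thesis unfolding Ev_def using js(3) by auto
  qed
  then show ?thesis unfolding power_def using event_meas[OF js(1,2)] by simp
qed

theorem lemma1:
  fixes n :: nat and \<mu> :: "nat \<Rightarrow> real" and \<alpha> \<beta> :: real and M :: "nat \<Rightarrow> nat set"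
  assumes "n \<ge> 1"
    and "\<forall>i\<in>{1..n}. \<mu> i \<ge> 0"
    and "0 < \<alpha>" "\<alpha> < 1" "0 < \<beta>" "\<beta> < 1"
    and "\<forall>k\<in>{1..n}. M k \<subseteq> {1..n} \<and> card (M k) = k"
    and "\<forall>k. 1 \<le> k \<and> k < n \<longrightarrow> M k \<subset> M (Suc k)"
  shows "((\<exists>k\<in>{1..n}. signal n \<mu> M k \<ge> (Ccrit k \<alpha> + Ccrit k \<beta>) * sqrt (real k))
            \<longrightarrow> power n \<mu> M \<alpha> \<ge> 1 - \<beta>)
       \<and> ((\<forall>k\<in>{1..n}. signal n \<mu> M k \<le> (Ccrit k \<alpha> - Ccrit k (1 - \<beta>)) * sqrt (real k))
            \<longrightarrow> power n \<mu> M \<alpha> < 1 - \<beta>)"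
proof -
  obtain js where js: "length js = n" "distinct js" "set js \<subseteq> {1..n}" "\<forall>k\<in>{1..n}. M k = set (take k js)"
    using nested_list[OF assms(7,8)] by blast
  define qs where "qs = map (qv \<mu>) js"
  have lq: "length qs = n" unfolding qs_def using js by simp
  have okq: "okq qs"
    unfolding okq_def qs_def qv_def using prob_space.prob_le_1[OF ND_prob] by (auto simp: measure_nonneg)
  have half: "\<forall>t<length qs. 1/2 \<le> qs!t"
  proof (intro allI impI)
    fix t assume t: "t < length qs"
    then have "js!t \<in> {1..n}" using js lq nth_mem by (metis qs_def length_map subsetD)
    then have "0 \<le> \<mu> (js!t)" using assms(2) by simp
    moreover have "t < length js" using t lq js by simp
    then have "qs!t = qv \<mu> (js!t)" by (simp add: qs_def)
    ultimately show "1/2 \<le> qs!t" unfolding qv_def using q_half by simp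
  qed
  have pw: "power n \<mu> M \<alpha> = Pr qs (Ev \<alpha> qs)" unfolding qs_def by (rule power_val) (use js in auto)
  have sg: "signal n \<mu> M k = mk qs k" if "k \<in> {1..n}" for k
    unfolding qs_def by (rule signal_val) (use js that in auto)
  show ?thesis
  proof (intro conjI impI)
    assume "\<exists>k\<in>{1..n}. signal n \<mu> M k \<ge> (Ccrit k \<alpha> + Ccrit k \<beta>) * sqrt (real k)"
    then obtain k where k: "k \<in> {1..n}" "(Ccrit k \<alpha> + Ccrit k \<beta>) * sqrt (real k) \<le> mk qs k" using sg by auto
    show "power n \<mu> M \<alpha> \<ge> 1 - \<beta>" unfolding pw
      by (rule part1_Pr[OF okq _ assms(5,6) k(2)]) (use k lq in simp)
  next
    assume "\<forall>k\<in>{1..n}. signal n \<mu> M k \<le> (Ccrit k \<alpha> - Ccrit k (1 - \<beta>)) * sqrt (real k)"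
    then have S: "\<forall>k\<in>{1..length qs}. mk qs k \<le> (Ccrit k \<alpha> - Ccrit k (1 - \<beta>)) * sqrt (real k)"
      using sg lq by auto
    show "power n \<mu> M \<alpha> < 1 - \<beta>" unfolding pw
      by (rule part2_Pr[OF okq half _ _ S]) (use assms in auto)
  qed
qed

end
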